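(* The family $\mathcal{T}_n \subset 2^{\binom{[n]}{2}}$ of all labelled spanning trees of $K_n$ (identified with their edge sets) is $(n/2, n-1)$-spread.
   Context: For $\mathcal{F}\subset 2^{[m]}$ and $X\subset[m]$, $\mathcal{F}(X):=\{A\setminus X : A\in\mathcal{F},\ X\subset A\}$. For $r>1$, $\mathcal{F}$ is $r$-spread if $|\mathcal{F}(X)|\le r^{-|X|}|\mathcal{F}|$ for all $X\subset[m]$. $\mathcal{F}$ is $(r,t)$-spread if for every $T\subset[m]$ with $|T|\le t$ the family $\mathcal{F}(T)$ is $r$-spread, i.e. for every such $T$ and every $U$ with $T\subseteq U\subseteq[m]$, $|\mathcal{F}(U)|\le r^{-(|U|-|T|)}|\mathcal{F}(T)|$. Here $[m]$ is the ground set $\binom{[n]}{2}$ of edges of $K_n$. *)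

theory Defs
  imports Complex_Main
begin

definition link :: "'a set set \<Rightarrow> 'a set \<Rightarrow> 'a set set" where
  "link F X = {A - X | A. A \<in> F \<and> X \<subseteq> A}"

definition spread :: "'a set \<Rightarrow> real \<Rightarrow> 'a set set \<Rightarrow> bool" where
  "spread M r F \<longleftrightarrow>
     (\<forall>X. X \<subseteq> M \<longrightarrow> real (card (link F X)) \<le> r powi (- int (card X)) * real (card F))"

definition rt_spread :: "'a set \<Rightarrow> real \<Rightarrow> nat \<Rightarrow> 'a set set \<Rightarrow> bool" where
  "rt_spread M r t F \<longleftrightarrow>
     (\<forall>T. T \<subseteq> M \<and> card T \<le> t \<longrightarrow> spread M r (link F T))"

definition Kn_edges :: "nat \<Rightarrow> nat set set" where
  "Kn_edges n = {{u, v} | u v. u \<in> {1..n} \<and> v \<in> {1..n} \<and> u \<noteq> v}"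

definition graph_connected :: "nat \<Rightarrow> nat set set \<Rightarrow> bool" where
  "graph_connected n E \<longleftrightarrow>
     (\<forall>u\<in>{1..n}. \<forall>v\<in>{1..n}. (u, v) \<in> {(x, y). {x, y} \<in> E}\<^sup>*)"

definition graph_acyclic :: "nat set set \<Rightarrow> bool" where
  "graph_acyclic E \<longleftrightarrow>
     \<not> (\<exists>vs. length vs \<ge> 3 \<and> distinct vs \<and>
            (\<forall>i < length vs. {vs ! i, vs ! ((i + 1) mod length vs)} \<in> E))"

definition spanning_trees :: "nat \<Rightarrow> nat set set set" where
  "spanning_trees n = {E. E \<subseteq> Kn_edges n \<and> graph_connected n E \<and> graph_acyclic E}"

end

theory Submission
  imports Defs "HOL-Library.Transitive_Closure_Table"
begin

definition conn :: "'a set set \<Rightarrow> ('a \<times> 'a) set" where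
  "conn E = {(x, y). {x, y} \<in> E}\<^sup>*"

definition forest :: "'a set set \<Rightarrow> bool" where
  "forest E \<longleftrightarrow> (\<forall>x y. {x, y} \<in> E \<longrightarrow> x \<noteq> y \<longrightarrow> (x, y) \<notin> conn (E - {{x, y}}))"

lemma conn_refl: "(x, x) \<in> conn E"
  by (simp add: conn_def)

lemma conn_edge: "{x, y} \<in> E \<Longrightarrow> (x, y) \<in> conn E"
  unfolding conn_def by auto

lemma conn_trans: "(x, y) \<in> conn E \<Longrightarrow> (y, z) \<in> conn E \<Longrightarrow> (x, z) \<in> conn E"
  unfolding conn_def by (rule rtrancl_trans)

lemma conn_sym: "(x, y) \<in> conn E \<Longrightarrow> (y, x) \<in> conn E"
proof -
  assume "(x, y) \<in> conn E"
  then have "(y, x) \<in> ({(x, y). {x, y} \<in> E}\<inverse>)\<^sup>*"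
    unfolding conn_def by (rule rtrancl_converseI)
  moreover have "{(x, y). {x, y} \<in> E}\<inverse> = {(x, y). {x, y} \<in> E}"
    by (auto simp: insert_commute)
  ultimately show ?thesis unfolding conn_def by simp
qed

lemma conn_mono: "E \<subseteq> E' \<Longrightarrow> (x, y) \<in> conn E \<Longrightarrow> (x, y) \<in> conn E'"
  unfolding conn_def by (rule rtrancl_mono[THEN subsetD, rotated]) auto

lemma conn_insert:
  assumes "(x, y) \<in> conn (insert {p, q} H)"
  shows "(x, y) \<in> conn H \<or> ((x, p) \<in> conn H \<and> (q, y) \<in> conn H) \<or> ((x, q) \<in> conn H \<and> (p, y) \<in> conn H)"
  using assms unfolding conn_def[of "insert {p, q} H"]
proof (induction rule: rtrancl_induct)
  case base
  then show ?case by (simp add: conn_refl)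
next
  case (step y z)
  from step.hyps(2) have "{y, z} \<in> H \<or> {y, z} = {p, q}" by auto
  then show ?case
  proof
    assume "{y, z} \<in> H"
    then have e: "(y, z) \<in> conn H" by (rule conn_edge)
    from step.IH show ?thesis using e conn_trans by metis
  next
    assume "{y, z} = {p, q}"
    then have "(y = p \<and> z = q) \<or> (y = q \<and> z = p)" by (auto simp: doubleton_eq_iff)
    then show ?thesis
    proof
      assume yz: "y = p \<and> z = q"
      show ?thesis using step.IH
      proof (elim disjE conjE)
        assume "(x, y) \<in> conn H" then show ?thesis using yz conn_refl by metis
      next
        assume "(x, p) \<in> conn H" "(q, y) \<in> conn H" then show ?thesis using yz conn_refl by metis
      next
        assume "(x, q) \<in> conn H" "(p, y) \<in> conn H" then show ?thesis using yz conn_refl by metis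
      qed
    next
      assume yz: "y = q \<and> z = p"
      show ?thesis using step.IH
      proof (elim disjE conjE)
        assume "(x, y) \<in> conn H" then show ?thesis using yz conn_refl by metis
      next
        assume "(x, p) \<in> conn H" "(q, y) \<in> conn H" then show ?thesis using yz conn_refl by metis
      next
        assume "(x, q) \<in> conn H" "(p, y) \<in> conn H" then show ?thesis using yz conn_refl by metis
      qed
    qed
  qed
qed

lemma forest_bridge: "forest E \<Longrightarrow> {a, b} \<in> E \<Longrightarrow> a \<noteq> b \<Longrightarrow> (a, b) \<notin> conn (E - {{a, b}})"
  unfolding forest_def by blast

lemma forest_mono: "forest E \<Longrightarrow> E' \<subseteq> E \<Longrightarrow> forest E'"
proof -
  assume F: "forest E" and S: "E' \<subseteq> E"
  show "forest E'" unfolding forest_def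
  proof (intro allI impI notI)
    fix x y assume a: "{x, y} \<in> E'" "x \<noteq> y" "(x, y) \<in> conn (E' - {{x, y}})"
    have "E' - {{x, y}} \<subseteq> E - {{x, y}}" using S by blast
    then have "(x, y) \<in> conn (E - {{x, y}})" using a(3) by (rule conn_mono)
    moreover have "{x, y} \<in> E" using a(1) S by blast
    ultimately show False using forest_bridge[OF F _ a(2)] by blast
  qed
qed

lemma forest_exchange:
  assumes F: "forest D" and pq: "(p, q) \<notin> conn D"
  shows "forest (insert {p, q} D)"
  unfolding forest_def
proof (intro allI impI notI)
  fix x y
  assume xy: "{x, y} \<in> insert {p, q} D" "x \<noteq> y" "(x, y) \<in> conn (insert {p, q} D - {{x, y}})"
  show False
  proof (cases "{x, y} = {p, q}")
    case True
    have sb: "insert {p, q} D - {{x, y}} \<subseteq> D" unfolding True by blast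
    have c: "(x, y) \<in> conn D" using conn_mono[OF sb xy(3)] .
    from True have "(x = p \<and> y = q) \<or> (x = q \<and> y = p)" by (simp add: doubleton_eq_iff)
    then show False
    proof
      assume "x = p \<and> y = q" then show False using c pq by simp
    next
      assume "x = q \<and> y = p" then show False using conn_sym[OF c] pq by simp
    qed
  next
    case False
    then have xyD: "{x, y} \<in> D" using xy(1) by blast
    have eq: "insert {p, q} D - {{x, y}} = insert {p, q} (D - {{x, y}})" using False by blast
    have nc: "(x, y) \<notin> conn (D - {{x, y}})" using forest_bridge[OF F xyD xy(2)] .
    have sub: "\<And>a b. (a, b) \<in> conn (D - {{x, y}}) \<Longrightarrow> (a, b) \<in> conn D"
      by (rule conn_mono[of "D - {{x, y}}" D]) blast+
    have exy: "(x, y) \<in> conn D" using conn_edge[OF xyD] .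
    from conn_insert[OF xy(3)[unfolded eq]] nc
    have "((x, p) \<in> conn D \<and> (q, y) \<in> conn D) \<or> ((x, q) \<in> conn D \<and> (p, y) \<in> conn D)"
      using sub by blast
    then have "(p, q) \<in> conn D"
    proof
      assume h: "(x, p) \<in> conn D \<and> (q, y) \<in> conn D"
      have "(p, x) \<in> conn D" using conn_sym h by metis
      moreover have "(y, q) \<in> conn D" using conn_sym h by metis
      ultimately show ?thesis using exy conn_trans by metis
    next
      assume h: "(x, q) \<in> conn D \<and> (p, y) \<in> conn D"
      have "(y, x) \<in> conn D" using conn_sym exy by metis
      then show ?thesis using h conn_trans by metis
    qed
    then show False using pq by simp
  qed
qed


lemma conn_rtranclp:
  assumes "(x, y) \<in> conn E" shows "(\<lambda>a b. {a, b} \<in> E)\<^sup>*\<^sup>* x y"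
  using assms unfolding conn_def
  by (induction rule: rtrancl_induct) (auto intro: rtranclp.rtrancl_into_rtrancl)

lemma acyclic_imp_forest:
  assumes A: "graph_acyclic E" shows "forest E"
  unfolding forest_def
proof (intro allI impI notI)
  fix x y
  assume xy: "{x, y} \<in> E" "x \<noteq> y" "(x, y) \<in> conn (E - {{x, y}})"
  define R where "R = (\<lambda>a b. {a, b} \<in> E - {{x, y}})"
  have "R\<^sup>*\<^sup>* x y" unfolding R_def by (rule conn_rtranclp[OF xy(3)])
  then obtain xs0 where "rtrancl_path R x xs0 y" by (auto simp: rtranclp_eq_rtrancl_path)
  then obtain xs where p: "rtrancl_path R x xs y" and d: "distinct (x # xs)"
    by (rule rtrancl_path_distinct)
  have ne: "xs \<noteq> []"
  proof
    assume "xs = []" then have "x = y" using p by (auto elim: rtrancl_path.cases)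
    then show False using xy(2) by simp
  qed
  have lst: "last xs = y" using rtrancl_path_last[OF p ne] .
  have len: "length xs \<ge> 2"
  proof (rule ccontr)
    assume "\<not> length xs \<ge> 2"
    moreover have "length xs \<noteq> 0" using ne by simp
    ultimately have l1: "length xs = 1" by arith
    then have "xs = [y]" using lst by (cases xs) auto
    then have "R x y" using rtrancl_path_nth[OF p, of 0] by simp
    then show False unfolding R_def by simp
  qed
  define vs where "vs = x # xs"
  have "length vs \<ge> 3" using len unfolding vs_def by simp
  moreover have "distinct vs" using d unfolding vs_def .
  moreover have "\<forall>i < length vs. {vs ! i, vs ! ((i + 1) mod length vs)} \<in> E"
  proof (intro allI impI)
    fix i assume i: "i < length vs"
    show "{vs ! i, vs ! ((i + 1) mod length vs)} \<in> E"
    proof (cases "i < length xs")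
      case True
      then have m: "(i + 1) mod length vs = i + 1" unfolding vs_def by simp
      have "R ((x # xs) ! i) (xs ! i)" using rtrancl_path_nth[OF p True] .
      moreover have "vs ! ((i + 1) mod length vs) = xs ! i" using m unfolding vs_def by simp
      ultimately show ?thesis unfolding R_def vs_def by simp
    next
      case False
      then have ii: "i = length xs" using i unfolding vs_def by simp
      then have m: "(i + 1) mod length vs = 0" unfolding vs_def by simp
      have "vs ! i = last xs" using ne unfolding ii vs_def by (simp add: last_conv_nth)
      then show ?thesis unfolding m using lst xy(1) unfolding vs_def by (simp add: insert_commute)
    qed
  qed
  ultimately show False using A unfolding graph_acyclic_def by blast
qed

lemma forest_imp_acyclic:
  assumes F: "forest E" shows "graph_acyclic E"
  unfolding graph_acyclic_def
proof
  assume "\<exists>vs. 3 \<le> length vs \<and> distinct vs \<and> (\<forall>i<length vs. {vs ! i, vs ! ((i + 1) mod length vs)} \<in> E)"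
  then obtain vs where k: "3 \<le> length vs" and d: "distinct vs"
    and cyc: "\<And>i. i < length vs \<Longrightarrow> {vs ! i, vs ! ((i + 1) mod length vs)} \<in> E" by blast
  define k where "k = length vs"
  define x where "x = vs ! 0"
  define y where "y = vs ! 1"
  have vne: "vs \<noteq> []" using k by auto
  have xyE: "{x, y} \<in> E" using cyc[of 0] k vne unfolding x_def y_def by simp
  have xy: "x \<noteq> y" using nth_eq_iff_index_eq[OF d, of 0 1] k vne unfolding x_def y_def by simp
  have eqi: "\<And>i j. i < k \<Longrightarrow> j < k \<Longrightarrow> vs ! i = vs ! j \<longleftrightarrow> i = j"
    using d unfolding k_def by (simp add: nth_eq_iff_index_eq)
  have step: "(y, vs ! j) \<in> conn (E - {{x, y}})" if "1 \<le> j" "j < k" for j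
    using that
  proof (induction j)
    case 0 then show ?case by simp
  next
    case (Suc j)
    show ?case
    proof (cases "j = 0")
      case True then show ?thesis unfolding y_def by (simp add: conn_refl)
    next
      case False
      then have ih: "(y, vs ! j) \<in> conn (E - {{x, y}})" using Suc by simp
      have m: "(j + 1) mod k = Suc j" using Suc.prems by simp
      have e: "{vs ! j, vs ! Suc j} \<in> E" using cyc[of j] Suc.prems m unfolding k_def by simp
      have ne: "{vs ! j, vs ! Suc j} \<noteq> {x, y}"
      proof
        assume h: "{vs ! j, vs ! Suc j} = {x, y}"
        then have "vs ! j = vs ! 0 \<or> vs ! j = vs ! 1" unfolding x_def y_def by (auto simp: doubleton_eq_iff)
        moreover have jk: "j < k" using Suc.prems by simp
        moreover have "0 < k" "1 < k" using k unfolding k_def by auto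
        ultimately have "j = 1" using eqi[of j 0] eqi[of j 1] False by blast
        then have "vs ! 2 = vs ! 0 \<or> vs ! 2 = vs ! 1" using h unfolding x_def y_def
          by (auto simp: doubleton_eq_iff numeral_2_eq_2)
        moreover have "0 < k" "1 < k" "2 < k" using k unfolding k_def by auto
        ultimately show False using eqi[of 2 0] eqi[of 2 1] by auto
      qed
      have "(vs ! j, vs ! Suc j) \<in> conn (E - {{x, y}})" using e ne by (intro conn_edge) blast
      then show ?thesis using ih conn_trans by metis
    qed
  qed
  have a: "(y, vs ! (k - 1)) \<in> conn (E - {{x, y}})" using step[of "k - 1"] k unfolding k_def by simp
  have kk: "k - 1 + 1 = k" using k unfolding k_def by simp
  have m: "(k - 1 + 1) mod k = 0" unfolding kk by simp
  have e: "{vs ! (k - 1), vs ! 0} \<in> E" using cyc[of "k - 1"] m k unfolding k_def by simp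
  have ne: "{vs ! (k - 1), vs ! 0} \<noteq> {x, y}"
  proof
    assume h: "{vs ! (k - 1), vs ! 0} = {x, y}"
    then have "vs ! (k - 1) = vs ! 0 \<or> vs ! (k - 1) = vs ! 1" unfolding x_def y_def by (auto simp: doubleton_eq_iff)
    moreover have "0 < k" "1 < k" "k - 1 < k" using k unfolding k_def by auto
    ultimately show False using eqi[of "k - 1" 0] eqi[of "k - 1" 1] k unfolding k_def by auto
  qed
  have "(vs ! (k - 1), x) \<in> conn (E - {{x, y}})" unfolding x_def using e ne unfolding x_def[symmetric]
    by (intro conn_edge) blast
  then have "(y, x) \<in> conn (E - {{x, y}})" using a conn_trans by metis
  then have "(x, y) \<in> conn (E - {{x, y}})" by (rule conn_sym)
  then show False using forest_bridge[OF F xyE xy] by simp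
qed

lemma acyclic_iff_forest: "graph_acyclic E \<longleftrightarrow> forest E"
  using acyclic_imp_forest forest_imp_acyclic by blast


lemma graph_connected_conn: "graph_connected n E \<longleftrightarrow> (\<forall>u\<in>{1..n}. \<forall>v\<in>{1..n}. (u, v) \<in> conn E)"
  unfolding graph_connected_def conn_def by simp

lemma connected_insert:
  assumes h: "\<forall>x\<in>{1..n}. (p, x) \<in> conn D \<or> (q, x) \<in> conn D"
  shows "graph_connected n (insert {p, q} D)"
proof -
  have sub: "D \<subseteq> insert {p, q} D" by blast
  have pq: "(p, q) \<in> conn (insert {p, q} D)" by (rule conn_edge) simp
  have px: "(p, x) \<in> conn (insert {p, q} D)" if x: "x \<in> {1..n}" for x
  proof -
    from h x have "(p, x) \<in> conn D \<or> (q, x) \<in> conn D" by blast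
    then show ?thesis
    proof
      assume "(p, x) \<in> conn D" then show ?thesis using conn_mono[OF sub] by simp
    next
      assume "(q, x) \<in> conn D" then have "(q, x) \<in> conn (insert {p, q} D)" using conn_mono[OF sub] by simp
      then show ?thesis using pq conn_trans by metis
    qed
  qed
  show ?thesis unfolding graph_connected_conn
  proof (intro ballI)
    fix a b assume "a \<in> {1..n}" "b \<in> {1..n}"
    then have "(p, a) \<in> conn (insert {p, q} D)" "(p, b) \<in> conn (insert {p, q} D)" using px by auto
    then show "(a, b) \<in> conn (insert {p, q} D)" using conn_sym conn_trans by metis
  qed
qed

lemma tree_split:
  assumes c: "graph_connected n T" and e: "{u, v} \<in> T" and u: "u \<in> {1..n}" and x: "x \<in> {1..n}"
  shows "(u, x) \<in> conn (T - {{u, v}}) \<or> (v, x) \<in> conn (T - {{u, v}})"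
proof -
  have "(u, x) \<in> conn T" using c u x unfolding graph_connected_conn by blast
  moreover have "T = insert {u, v} (T - {{u, v}})" using e by blast
  ultimately have "(u, x) \<in> conn (insert {u, v} (T - {{u, v}}))" by simp
  from conn_insert[OF this] show ?thesis using conn_refl by metis
qed

lemma unique_aux:
  assumes nab: "(a, b) \<notin> conn D" and c: "(b, w1) \<in> conn D" and t: "T' = insert {a, w1} D"
    and w: "{a, w2} \<in> T'" and ne: "w1 \<noteq> w2"
  shows "(b, w1) \<in> conn (T' - {{a, w1}, {a, w2}})"
proof -
  have naw: "{a, w1} \<notin> D"
  proof
    assume "{a, w1} \<in> D"
    then have "(a, w1) \<in> conn D" by (rule conn_edge)
    moreover have "(w1, b) \<in> conn D" using conn_sym[OF c] .
    ultimately show False using nab conn_trans by metis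
  qed
  have dd: "{a, w2} \<noteq> {a, w1}" using ne by (auto simp: doubleton_eq_iff)
  define H where "H = T' - {{a, w1}, {a, w2}}"
  have HD: "H \<subseteq> D" unfolding H_def t by blast
  have DH: "D \<subseteq> insert {a, w2} H" unfolding H_def t using naw by blast
  have "(b, w1) \<in> conn (insert {a, w2} H)" using conn_mono[OF DH c] .
  from conn_insert[OF this]
  have "(b, w1) \<in> conn H \<or> ((b, a) \<in> conn H \<and> (w2, w1) \<in> conn H) \<or> ((b, w2) \<in> conn H \<and> (a, w1) \<in> conn H)" .
  then have "(b, w1) \<in> conn H"
  proof (elim disjE conjE)
    assume "(b, w1) \<in> conn H" then show ?thesis .
  next
    assume "(b, a) \<in> conn H"
    then have "(b, a) \<in> conn D" using conn_mono[OF HD] by simp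
    then show ?thesis using nab conn_sym by metis
  next
    assume "(a, w1) \<in> conn H"
    then have "(a, w1) \<in> conn D" using conn_mono[OF HD] by simp
    moreover have "(w1, b) \<in> conn D" using conn_sym[OF c] .
    ultimately show ?thesis using nab conn_trans by metis
  qed
  then show ?thesis unfolding H_def .
qed

lemma unique_pre:
  assumes F1: "forest T1" and F2: "forest T2" and e1: "{a, b} \<in> T1" and e2: "{a, b} \<in> T2"
    and ab: "a \<noteq> b"
    and c1: "(b, w1) \<in> conn (T1 - {{a, b}})" and c2: "(b, w2) \<in> conn (T2 - {{a, b}})"
    and t1: "T' = insert {a, w1} (T1 - {{a, b}})" and t2: "T' = insert {a, w2} (T2 - {{a, b}})"
    and F': "forest T'"
  shows "w1 = w2 \<and> T1 = T2"
proof -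
  define D1 where "D1 = T1 - {{a, b}}"
  define D2 where "D2 = T2 - {{a, b}}"
  have nab1: "(a, b) \<notin> conn D1" unfolding D1_def by (rule forest_bridge[OF F1 e1 ab])
  have nab2: "(a, b) \<notin> conn D2" unfolding D2_def by (rule forest_bridge[OF F2 e2 ab])
  have naw1: "{a, w1} \<notin> D1"
  proof
    assume "{a, w1} \<in> D1"
    then have "(a, w1) \<in> conn D1" by (rule conn_edge)
    moreover have "(w1, b) \<in> conn D1" using conn_sym c1 unfolding D1_def by metis
    ultimately show False using nab1 conn_trans by metis
  qed
  have naw2: "{a, w2} \<notin> D2"
  proof
    assume "{a, w2} \<in> D2"
    then have "(a, w2) \<in> conn D2" by (rule conn_edge)
    moreover have "(w2, b) \<in> conn D2" using conn_sym c2 unfolding D2_def by metis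
    ultimately show False using nab2 conn_trans by metis
  qed
  have aw1: "a \<noteq> w1"
  proof
    assume "a = w1"
    then have "(b, a) \<in> conn D1" using c1 unfolding D1_def by simp
    then show False using nab1 conn_sym by metis
  qed
  have w: "w1 = w2"
  proof (rule ccontr)
    assume ne: "w1 \<noteq> w2"
    have w2T: "{a, w2} \<in> T'" using t2 by blast
    have w1T: "{a, w1} \<in> T'" using t1 by blast
    have h1: "(b, w1) \<in> conn (T' - {{a, w1}, {a, w2}})"
      by (rule unique_aux[OF nab1 c1[folded D1_def] t1[folded D1_def] w2T ne])
    have h2: "(b, w2) \<in> conn (T' - {{a, w2}, {a, w1}})"
      by (rule unique_aux[OF nab2 c2[folded D2_def] t2[folded D2_def] w1T]) (use ne in simp)
    have hh: "T' - {{a, w2}, {a, w1}} = T' - {{a, w1}, {a, w2}}" by (simp add: insert_commute)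
    have "(w2, w1) \<in> conn (T' - {{a, w1}, {a, w2}})" using h1 h2 hh conn_sym conn_trans by metis
    moreover have sub: "T' - {{a, w1}, {a, w2}} \<subseteq> T' - {{a, w1}}" by blast
    ultimately have x: "(w2, w1) \<in> conn (T' - {{a, w1}})" using conn_mono by metis
    have dd: "{a, w2} \<noteq> {a, w1}" using ne by (auto simp: doubleton_eq_iff)
    have "{a, w2} \<in> T' - {{a, w1}}" using w2T dd by blast
    then have "(a, w2) \<in> conn (T' - {{a, w1}})" by (rule conn_edge)
    then have "(a, w1) \<in> conn (T' - {{a, w1}})" using x conn_trans by metis
    then show False using forest_bridge[OF F' w1T aw1] by simp
  qed
  have "D1 = T' - {{a, w1}}" using t1 naw1 unfolding D1_def by blast
  moreover have "D2 = T' - {{a, w1}}" using t2 naw2 w unfolding D2_def by blast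
  ultimately have "D1 = D2" by simp
  then have "T1 = T2" using e1 e2 unfolding D1_def D2_def by blast
  then show ?thesis using w by simp
qed


lemma st_iff: "T \<in> spanning_trees n \<longleftrightarrow> T \<subseteq> Kn_edges n \<and> graph_connected n T \<and> forest T"
  unfolding spanning_trees_def by (simp add: acyclic_iff_forest)

lemma Kn_sub: "Kn_edges n \<subseteq> Pow {1..n}"
  unfolding Kn_edges_def by blast

lemma finite_Kn: "finite (Kn_edges n)"
  using Kn_sub finite_subset by (metis finite_Pow_iff finite_atLeastAtMost)

lemma finite_st: "finite (spanning_trees n)"
proof -
  have "spanning_trees n \<subseteq> Pow (Kn_edges n)" unfolding spanning_trees_def by blast
  then show ?thesis using finite_Kn finite_subset by (metis finite_Pow_iff)
qed

lemma Kn_mem: "p \<in> {1..n} \<Longrightarrow> w \<in> {1..n} \<Longrightarrow> p \<noteq> w \<Longrightarrow> {p, w} \<in> Kn_edges n"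
  unfolding Kn_edges_def by blast

lemma key:
  assumes f: "f \<in> Kn_edges n" and fY: "f \<notin> Y"
  shows "n * card {T \<in> spanning_trees n. insert f Y \<subseteq> T} \<le> 2 * card {T \<in> spanning_trees n. Y \<subseteq> T}"
proof -
  obtain u v where fuv: "f = {u, v}" and u: "u \<in> {1..n}" and v: "v \<in> {1..n}" and uv: "u \<noteq> v"
    using f unfolding Kn_edges_def by blast
  have fvu: "f = {v, u}" using fuv by (simp add: insert_commute)
  define A where "A = {T \<in> spanning_trees n. insert f Y \<subseteq> T}"
  define B where "B = {T \<in> spanning_trees n. Y \<subseteq> T}"
  define N where "N = {1..n}"
  define phi where "phi = (\<lambda>(T, w). if (u, w) \<in> conn (T - {f}) then insert {v, w} (T - {f}) else insert {u, w} (T - {f}))"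
  have finA: "finite A" unfolding A_def using finite_st by simp
  have finB: "finite B" unfolding B_def using finite_st by simp
  have finAN: "finite (A \<times> N)" using finA unfolding N_def by simp
  have Aprops: "T \<subseteq> Kn_edges n \<and> graph_connected n T \<and> forest T \<and> f \<in> T \<and> Y \<subseteq> T \<and> (u, v) \<notin> conn (T - {f})
      \<and> (\<forall>x\<in>N. (u, x) \<in> conn (T - {f}) \<or> (v, x) \<in> conn (T - {f}))" if T: "T \<in> A" for T
  proof -
    have a: "T \<subseteq> Kn_edges n" "graph_connected n T" "forest T" "f \<in> T" "Y \<subseteq> T"
      using T unfolding A_def st_iff by auto
    have "(u, v) \<notin> conn (T - {f})" using forest_bridge[OF a(3) a(4)[unfolded fuv] uv] fuv by simp
    moreover have "\<forall>x\<in>N. (u, x) \<in> conn (T - {f}) \<or> (v, x) \<in> conn (T - {f})"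
      using tree_split[OF a(2) a(4)[unfolded fuv] u] fuv unfolding N_def by simp
    ultimately show ?thesis using a by blast
  qed
  have claimA: "phi (T, w) \<in> B" if T: "T \<in> A" and w: "w \<in> N" for T w
  proof -
    define D where "D = T - {f}"
    note P = Aprops[OF T, folded D_def]
    have FD: "forest D" using forest_mono[of T D] P unfolding D_def by blast
    have YD: "Y \<subseteq> D" using P fY unfolding D_def by blast
    have DK: "D \<subseteq> Kn_edges n" using P unfolding D_def by blast
    have nuv: "(u, v) \<notin> conn D" using P by blast
    have split: "\<forall>x\<in>N. (u, x) \<in> conn D \<or> (v, x) \<in> conn D" using P by blast
    show ?thesis
    proof (cases "(u, w) \<in> conn D")
      case True
      then have ph: "phi (T, w) = insert {v, w} D" unfolding phi_def D_def by simp
      have vw: "v \<noteq> w" using True nuv by blast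
      have nvw: "(v, w) \<notin> conn D"
      proof
        assume "(v, w) \<in> conn D"
        then have "(w, v) \<in> conn D" by (rule conn_sym)
        then show False using True nuv conn_trans by metis
      qed
      have F: "forest (insert {v, w} D)" by (rule forest_exchange[OF FD nvw])
      have C: "graph_connected n (insert {v, w} D)"
      proof (rule connected_insert, intro ballI)
        fix x assume x: "x \<in> {1..n}"
        then have "(u, x) \<in> conn D \<or> (v, x) \<in> conn D" using split unfolding N_def by blast
        moreover have "(w, u) \<in> conn D" using conn_sym[OF True] .
        ultimately show "(v, x) \<in> conn D \<or> (w, x) \<in> conn D" using conn_trans by metis
      qed
      have K: "insert {v, w} D \<subseteq> Kn_edges n" using Kn_mem[OF v w[unfolded N_def] vw] DK by blast
      show ?thesis unfolding ph B_def st_iff using F C K YD by blast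
    next
      case False
      then have ph: "phi (T, w) = insert {u, w} D" unfolding phi_def D_def by simp
      have vw: "(v, w) \<in> conn D" using split w False by blast
      have uw: "u \<noteq> w" using False conn_refl by metis
      have F: "forest (insert {u, w} D)" by (rule forest_exchange[OF FD False])
      have C: "graph_connected n (insert {u, w} D)"
      proof (rule connected_insert, intro ballI)
        fix x assume x: "x \<in> {1..n}"
        then have "(u, x) \<in> conn D \<or> (v, x) \<in> conn D" using split unfolding N_def by blast
        moreover have "(w, v) \<in> conn D" using conn_sym[OF vw] .
        ultimately show "(u, x) \<in> conn D \<or> (w, x) \<in> conn D" using conn_trans by metis
      qed
      have K: "insert {u, w} D \<subseteq> Kn_edges n" using Kn_mem[OF u w[unfolded N_def] uw] DK by blast
      show ?thesis unfolding ph B_def st_iff using F C K YD by blast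
    qed
  qed
  define fib where "fib = (\<lambda>T'. {p \<in> A \<times> N. phi p = T'})"
  have claimB: "card (fib T') \<le> 2" if T': "T' \<in> B" for T'
  proof -
    have FT': "forest T'" using T' unfolding B_def st_iff by blast
    define P1 where "P1 = {p \<in> A \<times> N. (u, snd p) \<in> conn (fst p - {f}) \<and> T' = insert {v, snd p} (fst p - {f})}"
    define P2 where "P2 = {p \<in> A \<times> N. (u, snd p) \<notin> conn (fst p - {f}) \<and> T' = insert {u, snd p} (fst p - {f})}"
    have sub: "fib T' \<subseteq> P1 \<union> P2"
    proof
      fix p assume p: "p \<in> fib T'"
      obtain T w where pp: "p = (T, w)" by (cases p)
      have m: "p \<in> A \<times> N" and e: "phi (T, w) = T'" using p unfolding fib_def pp by auto
      show "p \<in> P1 \<union> P2"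
      proof (cases "(u, w) \<in> conn (T - {f})")
        case True
        then have "T' = insert {v, w} (T - {f})" using e unfolding phi_def by simp
        then have "p \<in> P1" unfolding P1_def using m True pp by simp
        then show ?thesis by blast
      next
        case False
        then have "T' = insert {u, w} (T - {f})" using e unfolding phi_def by simp
        then have "p \<in> P2" unfolding P2_def using m False pp by simp
        then show ?thesis by blast
      qed
    qed
    have fin1: "finite P1" using finAN unfolding P1_def by simp
    have fin2: "finite P2" using finAN unfolding P2_def by simp
    have c1: "card P1 \<le> 1"
    proof -
      have "\<forall>p1\<in>P1. \<forall>p2\<in>P1. p1 = p2"
      proof (intro ballI)
        fix p1 p2 assume p1: "p1 \<in> P1" and p2: "p2 \<in> P1"
        obtain T1 w1 where pp1: "p1 = (T1, w1)" by (cases p1)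
        obtain T2 w2 where pp2: "p2 = (T2, w2)" by (cases p2)
        have h1: "T1 \<in> A" "(u, w1) \<in> conn (T1 - {f})" "T' = insert {v, w1} (T1 - {f})"
          using p1 unfolding pp1 P1_def by auto
        have h2: "T2 \<in> A" "(u, w2) \<in> conn (T2 - {f})" "T' = insert {v, w2} (T2 - {f})"
          using p2 unfolding pp2 P1_def by auto
        have "w1 = w2 \<and> T1 = T2"
          using unique_pre[of T1 T2 v u w1 w2 T'] Aprops[OF h1(1)] Aprops[OF h2(1)] h1 h2 uv FT'
          unfolding fvu by metis
        then show "p1 = p2" unfolding pp1 pp2 by simp
      qed
      then show ?thesis using card_le_Suc0_iff_eq[OF fin1] by simp
    qed
    have c2: "card P2 \<le> 1"
    proof -
      have "\<forall>p1\<in>P2. \<forall>p2\<in>P2. p1 = p2"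
      proof (intro ballI)
        fix p1 p2 assume p1: "p1 \<in> P2" and p2: "p2 \<in> P2"
        obtain T1 w1 where pp1: "p1 = (T1, w1)" by (cases p1)
        obtain T2 w2 where pp2: "p2 = (T2, w2)" by (cases p2)
        have h1: "T1 \<in> A" "w1 \<in> N" "(u, w1) \<notin> conn (T1 - {f})" "T' = insert {u, w1} (T1 - {f})"
          using p1 unfolding pp1 P2_def by auto
        have h2: "T2 \<in> A" "w2 \<in> N" "(u, w2) \<notin> conn (T2 - {f})" "T' = insert {u, w2} (T2 - {f})"
          using p2 unfolding pp2 P2_def by auto
        have v1: "(v, w1) \<in> conn (T1 - {f})" using Aprops[OF h1(1)] h1(2,3) by blast
        have v2: "(v, w2) \<in> conn (T2 - {f})" using Aprops[OF h2(1)] h2(2,3) by blast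
        have "w1 = w2 \<and> T1 = T2"
          using unique_pre[of T1 T2 u v w1 w2 T'] Aprops[OF h1(1)] Aprops[OF h2(1)] h1 h2 v1 v2 uv FT'
          unfolding fuv by metis
        then show "p1 = p2" unfolding pp1 pp2 by simp
      qed
      then show ?thesis using card_le_Suc0_iff_eq[OF fin2] by simp
    qed
    have "card (fib T') \<le> card (P1 \<union> P2)" using sub fin1 fin2 by (simp add: card_mono)
    also have "\<dots> \<le> card P1 + card P2" by (rule card_Un_le)
    finally show ?thesis using c1 c2 by simp
  qed
  have cover: "A \<times> N \<subseteq> (\<Union>T'\<in>B. fib T')"
    unfolding fib_def using claimA by fastforce
  have "card A * n = card (A \<times> N)" unfolding N_def by (simp add: card_cartesian_product)
  also have "\<dots> \<le> card (\<Union>T'\<in>B. fib T')"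
  proof (rule card_mono[OF _ cover])
    show "finite (\<Union>T'\<in>B. fib T')" using finB finAN unfolding fib_def by auto
  qed
  also have "\<dots> \<le> (\<Sum>T'\<in>B. card (fib T'))" by (rule card_UN_le[OF finB])
  also have "\<dots> \<le> (\<Sum>T'\<in>B. 2)" by (rule sum_mono) (rule claimB)
  also have "\<dots> = 2 * card B" by simp
  finally show ?thesis unfolding A_def B_def by (simp add: mult.commute)
qed


lemma iter:
  assumes "finite X"
  shows "X \<subseteq> Kn_edges n \<Longrightarrow> X \<inter> T = {} \<Longrightarrow>
    real (card {A \<in> spanning_trees n. T \<union> X \<subseteq> A}) * (real n / 2) ^ card X \<le> real (card {A \<in> spanning_trees n. T \<subseteq> A})"
  using assms
proof (induction X rule: finite_induct)
  case empty
  then show ?case by simp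
next
  case (insert f X)
  have fK: "f \<in> Kn_edges n" using insert.prems by blast
  have fY: "f \<notin> T \<union> X" using insert.prems insert.hyps by blast
  have k: "real n * real (card {A \<in> spanning_trees n. insert f (T \<union> X) \<subseteq> A}) \<le> 2 * real (card {A \<in> spanning_trees n. T \<union> X \<subseteq> A})"
    using key[OF fK fY] by (metis (mono_tags, lifting) of_nat_le_iff of_nat_mult of_nat_numeral)
  have ih: "real (card {A \<in> spanning_trees n. T \<union> X \<subseteq> A}) * (real n / 2) ^ card X \<le> real (card {A \<in> spanning_trees n. T \<subseteq> A})"
    using insert by blast
  have eq: "T \<union> insert f X = insert f (T \<union> X)" by blast
  have c: "card (insert f X) = Suc (card X)" using insert.hyps by simp
  define a where "a = real (card {A \<in> spanning_trees n. insert f (T \<union> X) \<subseteq> A})"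
  define b where "b = real (card {A \<in> spanning_trees n. T \<union> X \<subseteq> A})"
  define r where "r = (real n / 2) ^ card X"
  have r0: "r \<ge> 0" unfolding r_def by simp
  have "a * (real n / 2) ^ card (insert f X) = (real n / 2 * a) * r" unfolding c r_def by simp
  also have "\<dots> \<le> b * r" using k r0 unfolding a_def b_def by (intro mult_right_mono) simp_all
  also have "\<dots> \<le> real (card {A \<in> spanning_trees n. T \<subseteq> A})" using ih unfolding b_def r_def .
  finally show ?case unfolding eq a_def .
qed

lemma card_link: "finite F \<Longrightarrow> card (link F Y) = card {A \<in> F. Y \<subseteq> A}"
proof -
  have "link F Y = (\<lambda>A. A - Y) ` {A \<in> F. Y \<subseteq> A}" unfolding link_def by blast
  moreover have "inj_on (\<lambda>A. A - Y) {A \<in> F. Y \<subseteq> A}"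
    by (rule inj_onI) blast
  ultimately show ?thesis by (simp add: card_image)
qed

lemma link_link_empty: "X \<inter> T \<noteq> {} \<Longrightarrow> link (link F T) X = {}"
  unfolding link_def by blast

lemma link_link: "X \<inter> T = {} \<Longrightarrow> link (link F T) X = link F (T \<union> X)"
proof -
  assume d: "X \<inter> T = {}"
  show ?thesis
  proof
    show "link (link F T) X \<subseteq> link F (T \<union> X)"
    proof
      fix C assume "C \<in> link (link F T) X"
      then obtain B A where "C = B - X" "X \<subseteq> B" "B = A - T" "A \<in> F" "T \<subseteq> A" unfolding link_def by blast
      then show "C \<in> link F (T \<union> X)" unfolding link_def by blast
    qed
  next
    show "link F (T \<union> X) \<subseteq> link (link F T) X"
    proof
      fix C assume "C \<in> link F (T \<union> X)"
      then obtain A where A: "C = A - (T \<union> X)" "A \<in> F" "T \<union> X \<subseteq> A" unfolding link_def by blast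
      have "A - T \<in> link F T" unfolding link_def using A by blast
      moreover have "X \<subseteq> A - T" using A d by blast
      moreover have "C = (A - T) - X" using A by blast
      ultimately show "C \<in> link (link F T) X" unfolding link_def by blast
    qed
  qed
qed

theorem lemma4p3:
  fixes n :: nat
  shows "rt_spread (Kn_edges n) (real n / 2) (n - 1) (spanning_trees n)"
  unfolding rt_spread_def spread_def
proof (intro allI impI, elim conjE)
  fix T X
  assume TM: "T \<subseteq> Kn_edges n" and XM: "X \<subseteq> Kn_edges n"
  have finF: "finite (spanning_trees n)" by (rule finite_st)
  show "real (card (link (link (spanning_trees n) T) X))
        \<le> (real n / 2) powi - int (card X) * real (card (link (spanning_trees n) T))"
  proof (cases "X \<inter> T = {}")
    case False
    then have "link (link (spanning_trees n) T) X = {}" by (rule link_link_empty)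
    moreover have "(real n / 2) powi - int (card X) \<ge> 0" by (simp add: power_int_minus)
    ultimately show ?thesis by simp
  next
    case True
    have l: "card (link (link (spanning_trees n) T) X) = card {A \<in> spanning_trees n. T \<union> X \<subseteq> A}"
      unfolding link_link[OF True] by (rule card_link[OF finF])
    have l2: "card (link (spanning_trees n) T) = card {A \<in> spanning_trees n. T \<subseteq> A}" by (rule card_link[OF finF])
    have finX: "finite X" using finite_subset[OF XM finite_Kn] .
    have it: "real (card {A \<in> spanning_trees n. T \<union> X \<subseteq> A}) * (real n / 2) ^ card X \<le> real (card {A \<in> spanning_trees n. T \<subseteq> A})"
      by (rule iter[OF finX XM True])
    show ?thesis
    proof (cases "X = {}")
      case True
      then show ?thesis unfolding l l2 by simp
    next
      case False
      then obtain e where e: "e \<in> Kn_edges n" using XM by blast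
      then obtain u v where uv: "u \<in> {1..n}" "v \<in> {1..n}" "u \<noteq> v" unfolding Kn_edges_def by blast
      have n2: "n \<ge> 2"
      proof (rule ccontr)
        assume "\<not> n \<ge> 2"
        then have "n \<le> 1" by simp
        then show False using uv by auto
      qed
      define c where "c = real (card {A \<in> spanning_trees n. T \<union> X \<subseteq> A})"
      define d where "d = real (card {A \<in> spanning_trees n. T \<subseteq> A})"
      define p where "p = (real n / 2) ^ card X"
      have pos: "p > 0" unfolding p_def using n2 by simp
      have h: "c * p \<le> d" using it unfolding c_def d_def p_def .
      have "c \<le> d / p" using h pos by (simp add: pos_le_divide_eq)
      also have "d / p = inverse p * d" by (simp add: divide_inverse)
      finally have "c \<le> inverse p * d" .
      then show ?thesis unfolding l l2 power_int_minus power_int_of_nat c_def d_def p_def .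
    qed
  qed
qed

end
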